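(* Assume (C1) and (C2). (i) There are positive constants $\rho$ and $\delta'$ such that $I(u)\ge\delta'$ for all $u\in\mathcal{D}$ with $\|u\|=\rho$. (ii) There is $\varphi\in\mathcal{D}\setminus\{0\}$ such that $I(t\varphi)\to-\infty$ as $t\to+\infty$.
   Context: Fix real numbers $p,q,r$ with $1<p<q$, $\frac p2$ a positive integer, and $r\ge1$, and functions $a,b,c:\mathbb{Z}\to(0,+\infty)$. Conditions: - (C1) There is $b_0>0$ with $b(n)\ge b_0$ for all $n$ and $b(n)\to+\infty$ as $|n|\to\infty$. - (C2) There is $c_0>0$ with $c(n)\le c_0$ for all $n$ and $\sum_n c(n)<+\infty$. Notation and spaces: - $\Delta u(n)=u(n+1)-u(n)$. - $E$ is the set of real sequences $u$ with $\|u\|:=\big(\sum_n[a(n)|\Delta u(n)|^p+b(n)|u(n)|^p]\big)^{1/p}<\infty$. - $\mathcal{D}=\{u\in E:\sum_n c(n)|u(n)|^q\ln|u(n)|^r<+\infty\}$, where terms with $u(n)=0$ are read as $0$. For $u\in\mathcal{D}$: $$I(u)=\frac1p\|u\|^p+\frac{r}{q^2}\sum_n c(n)|u(n)|^q-\frac1q\sum_n c(n)|u(n)|^q\ln|u(n)|^r.$$ *)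

theory Defs
  imports "HOL-Analysis.Analysis"
begin

definition fdiff :: "(int \<Rightarrow> real) \<Rightarrow> int \<Rightarrow> real" where
  "fdiff u n = u (n + 1) - u n"

definition E_term :: "real \<Rightarrow> (int \<Rightarrow> real) \<Rightarrow> (int \<Rightarrow> real) \<Rightarrow> (int \<Rightarrow> real) \<Rightarrow> int \<Rightarrow> real" where
  "E_term p a b u n = a n * \<bar>fdiff u n\<bar> powr p + b n * \<bar>u n\<bar> powr p"

definition Espace :: "real \<Rightarrow> (int \<Rightarrow> real) \<Rightarrow> (int \<Rightarrow> real) \<Rightarrow> (int \<Rightarrow> real) set" where
  "Espace p a b = {u. E_term p a b u summable_on UNIV}"

definition Enorm :: "real \<Rightarrow> (int \<Rightarrow> real) \<Rightarrow> (int \<Rightarrow> real) \<Rightarrow> (int \<Rightarrow> real) \<Rightarrow> real" where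
  "Enorm p a b u = (\<Sum>\<^sub>\<infinity>n. E_term p a b u n) powr (1 / p)"

text \<open>Summand c(n)|u(n)|^q ln |u(n)|^r; it is 0 when u(n) = 0 (0 powr q = 0).\<close>
definition log_term :: "real \<Rightarrow> real \<Rightarrow> (int \<Rightarrow> real) \<Rightarrow> (int \<Rightarrow> real) \<Rightarrow> int \<Rightarrow> real" where
  "log_term q r c u n = c n * \<bar>u n\<bar> powr q * ln (\<bar>u n\<bar> powr r)"

definition Dspace :: "real \<Rightarrow> real \<Rightarrow> real \<Rightarrow> (int \<Rightarrow> real) \<Rightarrow> (int \<Rightarrow> real) \<Rightarrow> (int \<Rightarrow> real) \<Rightarrow> (int \<Rightarrow> real) set" where
  "Dspace p q r a b c = {u \<in> Espace p a b. log_term q r c u summable_on UNIV}"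

definition Ifun :: "real \<Rightarrow> real \<Rightarrow> real \<Rightarrow> (int \<Rightarrow> real) \<Rightarrow> (int \<Rightarrow> real) \<Rightarrow> (int \<Rightarrow> real) \<Rightarrow> (int \<Rightarrow> real) \<Rightarrow> real" where
  "Ifun p q r a b c u =
     1 / p * Enorm p a b u powr p
     + r / q\<^sup>2 * (\<Sum>\<^sub>\<infinity>n. c n * \<bar>u n\<bar> powr q)
     - 1 / q * (\<Sum>\<^sub>\<infinity>n. log_term q r c u n)"

end

theory Submission imports Defs begin

lemma part1:
  fixes p q r :: real and a b c :: "int \<Rightarrow> real"
  assumes "1 < p" and "p < q" and "r \<ge> 1"
    and "\<And>n. a n > 0" and "\<And>n. b n > 0" and "\<And>n. c n > 0"
    and b0: "b0 > 0" "\<forall>n. b n \<ge> b0"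
  shows "\<exists>\<rho>>0. \<exists>\<delta>'>0. \<forall>u\<in>Dspace p q r a b c.
             Enorm p a b u = \<rho> \<longrightarrow> Ifun p q r a b c u \<ge> \<delta>'"
proof -
  define \<rho> where "\<rho> = min 1 b0"
  have rho: "0 < \<rho>" "\<rho> \<le> 1" "\<rho> \<le> b0" using b0 by (auto simp: \<rho>_def)
  have d: "0 < \<rho> powr p / p" using rho assms by simp
  have "\<forall>u\<in>Dspace p q r a b c. Enorm p a b u = \<rho> \<longrightarrow> Ifun p q r a b c u \<ge> \<rho> powr p / p"
  proof (intro ballI impI)
  fix u assume uD: "u \<in> Dspace p q r a b c" and nu: "Enorm p a b u = \<rho>"
  have sE: "E_term p a b u summable_on UNIV" and sL: "log_term q r c u summable_on UNIV"
    using uD by (auto simp: Dspace_def Espace_def)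
  have Enn: "\<And>n. E_term p a b u n \<ge> 0" unfolding E_term_def using assms
    by (intro add_nonneg_nonneg mult_nonneg_nonneg) (auto intro: less_imp_le)
  define S where "S = (\<Sum>\<^sub>\<infinity>n. E_term p a b u n)"
  have S0: "S \<ge> 0" unfolding S_def by (rule infsum_nonneg) (use Enn in auto)
  have "S = (S powr (1/p)) powr p" using S0 assms by (simp add: powr_powr)
  also have "S powr (1/p) = \<rho>" using nu by (simp add: Enorm_def S_def)
  finally have S\<rho>: "S = \<rho> powr p" .
  have "\<rho> powr p \<le> \<rho> powr 1" using rho assms by (intro powr_mono') auto
  hence Sb: "S \<le> b0" using rho S\<rho> by simp
  have ule: "\<bar>u n\<bar> \<le> 1" for n
  proof -
    have "E_term p a b u n = (\<Sum>\<^sub>\<infinity>k\<in>{n}. E_term p a b u k)" by simp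
    also have "\<dots> \<le> S" unfolding S_def
      by (rule infsum_mono_neutral) (use sE Enn in auto)
    finally have "E_term p a b u n \<le> S" .
    moreover have "b n * \<bar>u n\<bar> powr p \<le> E_term p a b u n" unfolding E_term_def
      using assms(4)[of n] by (simp add: less_imp_le)
    moreover have "b0 * \<bar>u n\<bar> powr p \<le> b n * \<bar>u n\<bar> powr p"
      using b0 by (intro mult_right_mono) auto
    ultimately have "b0 * \<bar>u n\<bar> powr p \<le> b0 * 1" using Sb by linarith
    hence "\<bar>u n\<bar> powr p \<le> 1" using b0 by simp
    show ?thesis
    proof (rule ccontr)
      assume "\<not> \<bar>u n\<bar> \<le> 1"
      hence "1 < \<bar>u n\<bar> powr p" using assms(1) by (intro gr_one_powr) auto
      thus False using \<open>\<bar>u n\<bar> powr p \<le> 1\<close> by simp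
    qed
  qed
  have L: "(\<Sum>\<^sub>\<infinity>n. log_term q r c u n) \<le> 0"
  proof -
    have "\<And>n. log_term q r c u n \<le> 0"
    proof -
      fix n
      have "ln (\<bar>u n\<bar> powr r) \<le> 0"
      proof (cases "u n = 0")
        case False
        hence "ln \<bar>u n\<bar> \<le> 0" using ule[of n] by simp
        thus ?thesis using False assms(3) by (simp add: ln_powr mult_nonneg_nonpos)
      qed simp
      thus "log_term q r c u n \<le> 0" unfolding log_term_def using assms(6)[of n]
        by (intro mult_nonneg_nonpos) (auto intro: less_imp_le)
    qed
    hence "(\<Sum>\<^sub>\<infinity>n. - log_term q r c u n) \<ge> 0" by (intro infsum_nonneg) auto
    thus ?thesis by (simp add: infsum_uminus)
  qed
  have C: "(\<Sum>\<^sub>\<infinity>n. c n * \<bar>u n\<bar> powr q) \<ge> 0"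
    by (intro infsum_nonneg mult_nonneg_nonneg) (auto intro: less_imp_le assms(6))
  have N: "Enorm p a b u powr p = \<rho> powr p" using nu by simp
  have "r / q\<^sup>2 \<ge> 0" using assms by simp
  hence C2: "r / q\<^sup>2 * (\<Sum>\<^sub>\<infinity>n. c n * \<bar>u n\<bar> powr q) \<ge> 0" using C by (rule mult_nonneg_nonneg)
  have "1 / q \<ge> 0" using assms by simp
  hence L2: "1 / q * (\<Sum>\<^sub>\<infinity>n. log_term q r c u n) \<le> 0" using L by (rule mult_nonneg_nonpos)
  have "\<rho> powr p / p = 1 / p * Enorm p a b u powr p" using N by simp
  thus "\<rho> powr p / p \<le> Ifun p q r a b c u"
    unfolding Ifun_def using C2 L2 by linarith
  qed
  thus ?thesis using rho d by blast
qed
lemma fin_infsum: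
  fixes f :: "int \<Rightarrow> real"
  assumes "finite S" "\<And>n. n \<notin> S \<Longrightarrow> f n = 0"
  shows "infsum f UNIV = sum f S" "f summable_on UNIV"
proof -
  have "infsum f UNIV = infsum f S"
    by (rule infsum_cong_neutral) (use assms in auto)
  thus "infsum f UNIV = sum f S" using assms by simp
  have "f summable_on S" using assms by simp
  thus "f summable_on UNIV"
    by (rule summable_on_cong_neutral[THEN iffD1, rotated -1]) (use assms in auto)
qed

definition "phi = (\<lambda>n::int. if n = 0 then 1 else (0::real))"

lemma Ifun_phi:
  fixes p q r :: real and a b c :: "int \<Rightarrow> real"
  assumes "1 < p" "0 < t" "0 < a (-1) + a 0 + b 0"
  defines "K \<equiv> a (-1) + a 0 + b 0"
  shows "(\<lambda>n. t * phi n) \<in> Dspace p q r a b c"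
    "Ifun p q r a b c (\<lambda>n. t * phi n) = K * t powr p / p + r / q\<^sup>2 * (c 0 * t powr q)
        - 1 / q * (c 0 * t powr q * (r * ln t))"
proof -
  let ?u = "\<lambda>n. t * phi n"
  have E: "E_term p a b ?u n = (if n \<in> {-1, 0} then (if n = -1 then a (-1) * t powr p else (a 0 + b 0) * t powr p) else 0)" for n
    using assms by (auto simp: E_term_def fdiff_def phi_def algebra_simps)
  have L: "log_term q r c ?u n = (if n \<in> {0} then c 0 * t powr q * (r * ln t) else 0)" for n
    using assms by (auto simp: log_term_def phi_def ln_powr)
  have C: "c n * \<bar>?u n\<bar> powr q = (if n \<in> {0} then c 0 * t powr q else 0)" for n
    using assms by (auto simp: phi_def)
  have sE: "E_term p a b ?u summable_on UNIV" "infsum (E_term p a b ?u) UNIV = K * t powr p"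
    using fin_infsum[of "{-1,0}" "E_term p a b ?u"] unfolding E by (auto simp: K_def algebra_simps)
  have sL: "log_term q r c ?u summable_on UNIV" "infsum (log_term q r c ?u) UNIV = c 0 * t powr q * (r * ln t)"
    using fin_infsum[of "{0}" "log_term q r c ?u"] unfolding L by auto
  have sC: "infsum (\<lambda>n. c n * \<bar>?u n\<bar> powr q) UNIV = c 0 * t powr q"
    using fin_infsum[of "{0}" "\<lambda>n. c n * \<bar>?u n\<bar> powr q"] unfolding C by auto
  show "?u \<in> Dspace p q r a b c" using sE sL by (simp add: Dspace_def Espace_def)
  have "K * t powr p \<ge> 0 \<or> True" by simp
  have "Enorm p a b ?u powr p = ((K * t powr p) powr (1/p)) powr p" using sE by (simp add: Enorm_def)
  also have "\<dots> = K * t powr p" 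
    using assms by (simp add: powr_powr K_def)
  finally show "Ifun p q r a b c ?u = K * t powr p / p + r / q\<^sup>2 * (c 0 * t powr q)
        - 1 / q * (c 0 * t powr q * (r * ln t))"
    unfolding Ifun_def using sL sC by simp
qed
lemma lim_part:
  fixes p q r K c0 :: real
  assumes "1 < p" "p < q" "1 \<le> r" "0 < K" "0 < c0"
  shows "filterlim (\<lambda>t. K * t powr p / p + r / q\<^sup>2 * (c0 * t powr q)
        - 1 / q * (c0 * t powr q * (r * ln t))) at_bot at_top"
  unfolding filterlim_at_bot
proof
  fix Z :: real
  define M where "M = K / p + r / q\<^sup>2 * c0"
  define T where "T = max 1 (max (exp ((M + 1) * q / (c0 * r))) (\<bar>Z\<bar> + 1))"
  have "eventually (\<lambda>t. t \<ge> T) at_top" by (rule eventually_ge_at_top)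
  thus "eventually (\<lambda>t. K * t powr p / p + r / q\<^sup>2 * (c0 * t powr q)
        - 1 / q * (c0 * t powr q * (r * ln t)) \<le> Z) at_top"
  proof (rule eventually_mono)
    fix t assume tT: "T \<le> t"
    have t1: "1 \<le> t" using tT unfolding T_def by linarith
    have q0: "0 < q" using assms by simp
    have "exp ((M + 1) * q / (c0 * r)) \<le> t" using tT by (simp add: T_def)
    hence "(M + 1) * q / (c0 * r) \<le> ln t" using t1
      by (metis exp_gt_zero exp_le_cancel_iff exp_ln less_le_trans zero_less_one)
    hence "(M + 1) * q \<le> c0 * r * ln t" using assms by (simp add: pos_divide_le_eq mult.commute)
    hence "M + 1 \<le> c0 * r * ln t / q" using q0 by (simp add: pos_le_divide_eq)
    hence B: "M - c0 * r * ln t / q \<le> -1" by simp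
    have pq: "t powr p \<le> t powr q" using t1 assms by (intro powr_mono) auto
    have tq: "t \<le> t powr q" using t1 assms powr_mono[of 1 q t] by simp
    have "K * t powr p / p \<le> K * t powr q / p" using pq assms by (simp add: divide_right_mono)
    hence "K * t powr p / p + r / q\<^sup>2 * (c0 * t powr q)
        - 1 / q * (c0 * t powr q * (r * ln t)) \<le> t powr q * (M - c0 * r * ln t / q)"
      by (simp add: M_def algebra_simps)
    also have "\<dots> \<le> t powr q * (-1)" using B by (intro mult_left_mono) auto
    also have "\<dots> \<le> Z" using tq tT unfolding T_def by (simp, linarith)
    finally show "K * t powr p / p + r / q\<^sup>2 * (c0 * t powr q)
        - 1 / q * (c0 * t powr q * (r * ln t)) \<le> Z" .
  qed
qed
theorem lemma4p3:
  fixes p q r :: real and a b c :: "int \<Rightarrow> real"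
  assumes "1 < p" and "p < q" and "\<exists>k::nat. k > 0 \<and> p / 2 = real k" and "r \<ge> 1"
    and "\<And>n. a n > 0" and "\<And>n. b n > 0" and "\<And>n. c n > 0"
    and C1: "\<exists>b0>0. \<forall>n. b n \<ge> b0" "filterlim b at_top cofinite"
    and C2: "\<exists>c0>0. \<forall>n. c n \<le> c0" "c summable_on UNIV"
  shows "(\<exists>\<rho>>0. \<exists>\<delta>'>0. \<forall>u\<in>Dspace p q r a b c.
             Enorm p a b u = \<rho> \<longrightarrow> Ifun p q r a b c u \<ge> \<delta>')
       \<and> (\<exists>\<phi>\<in>Dspace p q r a b c. \<phi> \<noteq> (\<lambda>n. 0) \<and>
             filterlim (\<lambda>t::real. Ifun p q r a b c (\<lambda>n. t * \<phi> n)) at_bot at_top)"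
proof
  obtain b0 where b0: "b0 > 0" "\<forall>n. b n \<ge> b0" using C1(1) by blast
  show "\<exists>\<rho>>0. \<exists>\<delta>'>0. \<forall>u\<in>Dspace p q r a b c.
             Enorm p a b u = \<rho> \<longrightarrow> Ifun p q r a b c u \<ge> \<delta>'"
    by (rule part1[OF assms(1,2,4,5,6,7) b0])
next
  have K: "0 < a (-1) + a 0 + b 0" using assms(5)[of "-1"] assms(5)[of 0] assms(6)[of 0] by linarith
  have "(\<lambda>n. 1 * phi n) \<in> Dspace p q r a b c" using Ifun_phi(1)[where t=1 and q=q and r=r and c=c and p=p and a=a and b=b, OF assms(1) zero_less_one K] by simp
  hence D: "phi \<in> Dspace p q r a b c" by simp
  have nz: "phi \<noteq> (\<lambda>n. 0)"
  proof
    assume "phi = (\<lambda>n. 0)"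
    hence "phi 0 = 0" by (rule fun_cong[where x=0, THEN trans]) simp
    thus False by (simp add: phi_def)
  qed
  have ev: "eventually (\<lambda>t. Ifun p q r a b c (\<lambda>n. t * phi n) =
      (a (-1) + a 0 + b 0) * t powr p / p + r / q\<^sup>2 * (c 0 * t powr q)
        - 1 / q * (c 0 * t powr q * (r * ln t))) at_top"
    using eventually_gt_at_top[of 0]
  proof eventually_elim
    case (elim t)
    show ?case by (rule Ifun_phi(2)[where q=q and r=r and c=c and p=p and a=a and b=b and t=t, OF assms(1) elim K])
  qed
  have "filterlim (\<lambda>t. (a (-1) + a 0 + b 0) * t powr p / p + r / q\<^sup>2 * (c 0 * t powr q)
        - 1 / q * (c 0 * t powr q * (r * ln t))) at_bot at_top"
    by (rule lim_part[OF assms(1,2,4) K assms(7)])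
  hence "filterlim (\<lambda>t::real. Ifun p q r a b c (\<lambda>n. t * phi n)) at_bot at_top"
    by (rule iffD2[OF filterlim_cong[OF refl refl ev]])
  thus "\<exists>\<phi>\<in>Dspace p q r a b c. \<phi> \<noteq> (\<lambda>n. 0) \<and>
             filterlim (\<lambda>t::real. Ifun p q r a b c (\<lambda>n. t * \<phi> n)) at_bot at_top"
    using D nz by blast
qed

end
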